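(* Let $X$ be a graph, $F$ a graph, and $\phi$ an $\mathrm{Aut}(F)$-voltage assignment on $X$. Let $\Gamma$ act on $X$ and $\Delta$ act on $F$ by graph automorphisms without inversions, such that the pair $(\Gamma, \Delta)$ is $\phi$-compatible. Then the product action $$(\gamma, \delta)(x, i) = (\gamma x, \delta i), \qquad (\gamma,\delta) \in \Gamma \times \Delta, \ (x,i) \in V(X \times^{\phi} F),$$ is an action by graph automorphisms on $X \times^{\phi} F$. Furthermore, if the actions of $\Gamma$ on $X$ and of $\Delta$ on $F$ are of finite co-volume, so is the action of $\Gamma \times \Delta$ on $X \times^{\phi} F$.
   Context: For a graph $G$, $E(\overrightarrow{G})$ is the set of ordered edges (each edge with both orientations); an $\mathrm{Aut}(F)$-voltage assignment on $G$ is a map $\phi: E(\overrightarrow{G}) \to \mathrm{Aut}(F)$ with $\phi(uv) = \phi(vu)^{-1}$. The graph bundle $X \times^{\phi} F$ has vertex set $V(X)\times V(F)$, with $(u,i) \sim (v,j)$ iff either $u \sim v$ and $j = i^{\phi(uv)}$ (the image of $i$ under $\phi(uv)$), or $u = v$ and $i \sim j$ in $F$. The action of $\Gamma$ on $X$ is $(F,\phi)$-compatible if $\phi(\gamma(u)\gamma(v)) = \phi(uv)$ for all edges $uv$ and all $\gamma \in \Gamma$. The action of $\Delta$ on $F$ (regarded as a subgroup of $\mathrm{Aut}(F)$) is $(X,\phi)$-compatible if the image of $\phi$ is contained in the centralizer $C_{\mathrm{Aut}(F)}(\Delta)$. The pair $(\Gamma,\Delta)$ is $\phi$-compatible if both hold.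 An action of a group $G$ on a graph is of finite co-volume if every vertex stabilizer $G_v$ is finite and $\sum_{v \in \mathcal{F}_0} 1/|G_v| < \infty$, where $\mathcal{F}_0$ is a set of representatives of the vertex orbits. *)

theory Defs
  imports "HOL-Analysis.Analysis" "HOL-Algebra.Group_Action"
begin

definition graph :: "'a set \<Rightarrow> ('a \<Rightarrow> 'a \<Rightarrow> bool) \<Rightarrow> bool" where
  "graph V E \<longleftrightarrow> (\<forall>u v. E u v \<longrightarrow> u \<in> V \<and> v \<in> V \<and> E v u)"

definition graph_aut :: "'a set \<Rightarrow> ('a \<Rightarrow> 'a \<Rightarrow> bool) \<Rightarrow> ('a \<Rightarrow> 'a) \<Rightarrow> bool" where
  "graph_aut V E f \<longleftrightarrow> bij_betw f V V \<and> (\<forall>u\<in>V. \<forall>v\<in>V. E u v \<longleftrightarrow> E (f u) (f v))"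

definition voltage_assignment ::
  "'a set \<Rightarrow> ('a \<Rightarrow> 'a \<Rightarrow> bool) \<Rightarrow> 'b set \<Rightarrow> ('b \<Rightarrow> 'b \<Rightarrow> bool) \<Rightarrow> ('a \<Rightarrow> 'a \<Rightarrow> 'b \<Rightarrow> 'b) \<Rightarrow> bool" where
  "voltage_assignment V E W EF \<phi> \<longleftrightarrow>
     (\<forall>u v. E u v \<longrightarrow> graph_aut W EF (\<phi> u v) \<and> (\<forall>i\<in>W. \<phi> v u (\<phi> u v i) = i))"

text \<open>Adjacency of the graph bundle X \<times>^\<phi> F (vertex set V \<times> W).\<close>
definition bundle_adj ::
  "('a \<Rightarrow> 'a \<Rightarrow> bool) \<Rightarrow> ('b \<Rightarrow> 'b \<Rightarrow> bool) \<Rightarrow> ('a \<Rightarrow> 'a \<Rightarrow> 'b \<Rightarrow> 'b) \<Rightarrow> ('a \<times> 'b) \<Rightarrow> ('a \<times> 'b) \<Rightarrow> bool" where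
  "bundle_adj E EF \<phi> p q \<longleftrightarrow>
     (E (fst p) (fst q) \<and> snd q = \<phi> (fst p) (fst q) (snd p)) \<or>
     (fst p = fst q \<and> EF (snd p) (snd q))"

definition aut_action :: "('g, 'm) monoid_scheme \<Rightarrow> 'a set \<Rightarrow> ('a \<Rightarrow> 'a \<Rightarrow> bool) \<Rightarrow> ('g \<Rightarrow> 'a \<Rightarrow> 'a) \<Rightarrow> bool" where
  "aut_action G V E \<alpha> \<longleftrightarrow> group_action G V \<alpha> \<and> (\<forall>g\<in>carrier G. graph_aut V E (\<alpha> g))"

definition without_inversions :: "('g, 'm) monoid_scheme \<Rightarrow> ('a \<Rightarrow> 'a \<Rightarrow> bool) \<Rightarrow> ('g \<Rightarrow> 'a \<Rightarrow> 'a) \<Rightarrow> bool" where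
  "without_inversions G E \<alpha> \<longleftrightarrow>
     (\<forall>g\<in>carrier G. \<forall>u v. E u v \<longrightarrow> \<not> (\<alpha> g u = v \<and> \<alpha> g v = u))"

definition F_phi_compatible :: "('g, 'm) monoid_scheme \<Rightarrow> ('a \<Rightarrow> 'a \<Rightarrow> bool) \<Rightarrow> 'b set
    \<Rightarrow> ('a \<Rightarrow> 'a \<Rightarrow> 'b \<Rightarrow> 'b) \<Rightarrow> ('g \<Rightarrow> 'a \<Rightarrow> 'a) \<Rightarrow> bool" where
  "F_phi_compatible G E W \<phi> \<alpha> \<longleftrightarrow>
     (\<forall>g\<in>carrier G. \<forall>u v. E u v \<longrightarrow> (\<forall>i\<in>W. \<phi> (\<alpha> g u) (\<alpha> g v) i = \<phi> u v i))"

text \<open>(X,\<phi>)-compatibility of the action of \<Delta> on F: the image of \<phi> lies in the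
  centralizer of \<Delta> in Aut(F).\<close>
definition X_phi_compatible :: "('h, 'n) monoid_scheme \<Rightarrow> ('a \<Rightarrow> 'a \<Rightarrow> bool) \<Rightarrow> 'b set
    \<Rightarrow> ('a \<Rightarrow> 'a \<Rightarrow> 'b \<Rightarrow> 'b) \<Rightarrow> ('h \<Rightarrow> 'b \<Rightarrow> 'b) \<Rightarrow> bool" where
  "X_phi_compatible H E W \<phi> \<beta> \<longleftrightarrow>
     (\<forall>h\<in>carrier H. \<forall>u v. E u v \<longrightarrow> (\<forall>i\<in>W. \<phi> u v (\<beta> h i) = \<beta> h (\<phi> u v i)))"

text \<open>Finite co-volume: finite stabilizers and \<Sum> over orbit representatives of
  1/|G_v| finite (a non-negative family, so summability = finiteness of the sum).\<close>
definition finite_covolume :: "('g, 'm) monoid_scheme \<Rightarrow> 'a set \<Rightarrow> ('g \<Rightarrow> 'a \<Rightarrow> 'a) \<Rightarrow> bool" where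
  "finite_covolume G V \<alpha> \<longleftrightarrow>
     (\<forall>v\<in>V. finite (stabilizer G \<alpha> v)) \<and>
     ((\<lambda>orb. 1 / real (card (stabilizer G \<alpha> (SOME v. v \<in> orb)))) summable_on orbits G V \<alpha>)"

definition prod_action :: "'a set \<Rightarrow> 'b set \<Rightarrow> ('g \<Rightarrow> 'a \<Rightarrow> 'a) \<Rightarrow> ('h \<Rightarrow> 'b \<Rightarrow> 'b)
    \<Rightarrow> ('g \<times> 'h) \<Rightarrow> ('a \<times> 'b) \<Rightarrow> ('a \<times> 'b)" where
  "prod_action V W \<alpha> \<beta> = (\<lambda>(g, h). \<lambda>p \<in> V \<times> W. (\<alpha> g (fst p), \<beta> h (snd p)))"

end

theory Submission
  imports Defs
begin


lemma prod_summable: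
  fixes f1 :: "'x \<Rightarrow> real" and f2 :: "'y \<Rightarrow> real"
  assumes "f1 summable_on A" "f2 summable_on B" "\<And>x. x \<in> A \<Longrightarrow> f1 x \<ge> 0" "\<And>y. y \<in> B \<Longrightarrow> f2 y \<ge> 0"
  shows "(\<lambda>(x,y). f1 x * f2 y) summable_on (A \<times> B)"
proof (rule summable_on_SigmaI[where g = "\<lambda>x. f1 x * infsum f2 B"])
  fix x assume "x \<in> A"
  show "((\<lambda>y. (\<lambda>(x,y). f1 x * f2 y) (x, y)) has_sum f1 x * infsum f2 B) B"
    using has_sum_cmult_right[OF has_sum_infsum[OF assms(2)]] by simp
next
  show "(\<lambda>x. f1 x * infsum f2 B) summable_on A" using assms(1) by (rule summable_on_cmult_left)
next
  fix x y assume "x \<in> A" "y \<in> B" then show "0 \<le> (\<lambda>(x,y). f1 x * f2 y) (x, y)" using assms by simp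
qed

lemma (in group_action) conj_stab_sub:
  assumes "g \<in> carrier G" "x \<in> E"
  shows "(\<lambda>h. g \<otimes> h \<otimes> inv g) ` stabilizer G \<phi> x \<subseteq> stabilizer G \<phi> (\<phi> g x)"
proof
  interpret group G using group_hom group_hom.axioms(1) by blast
  fix k assume "k \<in> (\<lambda>h. g \<otimes> h \<otimes> inv g) ` stabilizer G \<phi> x"
  then obtain h where h: "h \<in> carrier G" "\<phi> h x = x" "k = g \<otimes> h \<otimes> inv g"
    by (auto simp: stabilizer_def)
  have gx: "\<phi> g x \<in> E" using element_image assms by blast
  have "\<phi> k (\<phi> g x) = \<phi> g (\<phi> h (\<phi> (inv g) (\<phi> g x)))"
    using h assms gx composition_rule element_image
    by (metis inv_closed m_closed)
  also have "\<phi> (inv g) (\<phi> g x) = x" using orbit_sym_aux assms by blast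
  finally show "k \<in> stabilizer G \<phi> (\<phi> g x)"
    using h assms by (simp add: stabilizer_def)
qed

lemma (in group_action) card_stab_orbit:
  assumes "x \<in> E" "y \<in> orbit G \<phi> x"
  shows "card (stabilizer G \<phi> y) = card (stabilizer G \<phi> x)"
proof -
  interpret group G using group_hom group_hom.axioms(1) by blast
  obtain g where g: "g \<in> carrier G" "y = \<phi> g x" using assms by (auto simp: orbit_def)
  have yE: "y \<in> E" using g assms element_image by blast
  have "(\<lambda>h. g \<otimes> h \<otimes> inv g) ` stabilizer G \<phi> x = stabilizer G \<phi> y"
  proof
    show "(\<lambda>h. g \<otimes> h \<otimes> inv g) ` stabilizer G \<phi> x \<subseteq> stabilizer G \<phi> y"
      using conj_stab_sub g assms by blast
  next
    show "stabilizer G \<phi> y \<subseteq> (\<lambda>h. g \<otimes> h \<otimes> inv g) ` stabilizer G \<phi> x"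
    proof
      fix k assume k: "k \<in> stabilizer G \<phi> y"
      have "\<phi> (inv g) y = x" using orbit_sym_aux g assms by blast
      then have "inv g \<otimes> k \<otimes> inv (inv g) \<in> stabilizer G \<phi> x"
        using conj_stab_sub[of "inv g" y] g yE k by auto
      moreover have kc: "k \<in> carrier G" using k stabilizer_subset by blast
      moreover have "k = g \<otimes> (inv g \<otimes> k \<otimes> inv (inv g)) \<otimes> inv g"
        using conjugation_is_surj[OF g(1) kc] g(1) by simp
      ultimately show "k \<in> (\<lambda>h. g \<otimes> h \<otimes> inv g) ` stabilizer G \<phi> x" by blast
    qed
  qed
  moreover have "inj_on (\<lambda>h. g \<otimes> h \<otimes> inv g) (stabilizer G \<phi> x)"
    using g stabilizer_subset conjugation_is_inj by (meson inj_onI subsetD)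
  ultimately show ?thesis by (metis card_image)
qed

lemma (in group_action) orbit_rep_card:
  assumes "Ob \<in> orbits G E \<phi>" "v \<in> Ob"
  shows "card (stabilizer G \<phi> (SOME v. v \<in> Ob)) = card (stabilizer G \<phi> v)"
proof -
  obtain x where x: "x \<in> E" "Ob = orbit G \<phi> x" using assms by (auto simp: orbits_def)
  have "(SOME v. v \<in> Ob) \<in> Ob" using assms by (metis someI)
  then show ?thesis using card_stab_orbit x assms by metis
qed

lemma (in group_action) orbit_nonempty:
  "Ob \<in> orbits G E \<phi> \<Longrightarrow> Ob \<noteq> {}"
  using orbit_refl by (auto simp: orbits_def)

lemma prod_group_action:
  assumes A: "group_action G V \<alpha>" and B: "group_action H W \<beta>"
  shows "group_action (G \<times>\<times> H) (V \<times> W) (prod_action V W \<alpha> \<beta>)"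
proof -
  interpret A: group_action G V \<alpha> by fact
  interpret B: group_action H W \<beta> by fact
  have gG: "group G" using A.group_hom group_hom.axioms(1) by blast
  have gH: "group H" using B.group_hom group_hom.axioms(1) by blast
  have bij: "prod_action V W \<alpha> \<beta> (g, h) \<in> Bij (V \<times> W)" if "g \<in> carrier G" "h \<in> carrier H" for g h
  proof -
    have "bij_betw (map_prod (\<alpha> g) (\<beta> h)) (V \<times> W) (V \<times> W)"
      using A.bij_prop0 B.bij_prop0 that by (intro bij_betw_map_prod) (auto simp: Bij_def)
    then have "bij_betw (prod_action V W \<alpha> \<beta> (g, h)) (V \<times> W) (V \<times> W)"
      by (rule bij_betw_cong[THEN iffD1, rotated]) (auto simp: prod_action_def)
    then show ?thesis by (auto simp: Bij_def prod_action_def)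
  qed
  show ?thesis
    unfolding group_action_def group_hom_def group_hom_axioms_def
  proof (intro conjI)
    show "group (G \<times>\<times> H)" using gG gH by (rule DirProd_group)
    show "group (BijGroup (V \<times> W))" by (rule group_BijGroup)
    show "prod_action V W \<alpha> \<beta> \<in> hom (G \<times>\<times> H) (BijGroup (V \<times> W))"
    proof (rule homI)
      fix x assume "x \<in> carrier (G \<times>\<times> H)"
      then show "prod_action V W \<alpha> \<beta> x \<in> carrier (BijGroup (V \<times> W))"
        using bij by (auto simp: BijGroup_def)
    next
      fix x y assume x: "x \<in> carrier (G \<times>\<times> H)" and y: "y \<in> carrier (G \<times>\<times> H)"
      obtain g h where gh: "x = (g, h)" "g \<in> carrier G" "h \<in> carrier H" using x by auto
      obtain g' h' where gh': "y = (g', h')" "g' \<in> carrier G" "h' \<in> carrier H" using y by auto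
      have "prod_action V W \<alpha> \<beta> ((g, h) \<otimes>\<^bsub>G \<times>\<times> H\<^esub> (g', h')) =
            compose (V \<times> W) (prod_action V W \<alpha> \<beta> (g, h)) (prod_action V W \<alpha> \<beta> (g', h'))"
      proof (rule ext)
        fix p
        show "prod_action V W \<alpha> \<beta> ((g, h) \<otimes>\<^bsub>G \<times>\<times> H\<^esub> (g', h')) p =
            compose (V \<times> W) (prod_action V W \<alpha> \<beta> (g, h)) (prod_action V W \<alpha> \<beta> (g', h')) p"
        proof (cases "p \<in> V \<times> W")
          case True
          then obtain v i where vi: "p = (v, i)" "v \<in> V" "i \<in> W" by blast
          have v': "\<alpha> g' v \<in> V" using A.element_image[OF gh'(2) vi(2) refl] .
          have i': "\<beta> h' i \<in> W" using B.element_image[OF gh'(3) vi(3) refl] .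
          have c1: "\<alpha> (g \<otimes>\<^bsub>G\<^esub> g') v = \<alpha> g (\<alpha> g' v)" using A.composition_rule[OF vi(2) gh(2) gh'(2)] .
          have c2: "\<beta> (h \<otimes>\<^bsub>H\<^esub> h') i = \<beta> h (\<beta> h' i)" using B.composition_rule[OF vi(3) gh(3) gh'(3)] .
          show ?thesis unfolding vi(1) using vi(2,3) v' i' c1 c2
            by (simp add: prod_action_def compose_def)
        next
          case False
          then show ?thesis by (simp add: prod_action_def compose_def)
        qed
      qed
      then show "prod_action V W \<alpha> \<beta> (x \<otimes>\<^bsub>G \<times>\<times> H\<^esub> y) =
          prod_action V W \<alpha> \<beta> x \<otimes>\<^bsub>BijGroup (V \<times> W)\<^esub> prod_action V W \<alpha> \<beta> y"
        using gh gh' bij by (simp add: BijGroup_def)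
    qed
  qed
qed


lemma prod_stab:
  assumes "v \<in> V" "i \<in> W"
  shows "stabilizer (G \<times>\<times> H) (prod_action V W \<alpha> \<beta>) (v, i) = stabilizer G \<alpha> v \<times> stabilizer H \<beta> i"
  using assms by (auto simp: stabilizer_def prod_action_def)

lemma prod_orbit:
  assumes "v \<in> V" "i \<in> W"
  shows "orbit (G \<times>\<times> H) (prod_action V W \<alpha> \<beta>) (v, i) = orbit G \<alpha> v \<times> orbit H \<beta> i"
  using assms by (auto simp: orbit_def prod_action_def)

lemma prod_orbits:
  "orbits (G \<times>\<times> H) (V \<times> W) (prod_action V W \<alpha> \<beta>) =
   (\<lambda>(A, B). A \<times> B) ` (orbits G V \<alpha> \<times> orbits H W \<beta>)"
proof -
  have "orbits (G \<times>\<times> H) (V \<times> W) (prod_action V W \<alpha> \<beta>) =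
        {orbit G \<alpha> v \<times> orbit H \<beta> i | v i. v \<in> V \<and> i \<in> W}"
    unfolding orbits_def using prod_orbit by fastforce
  also have "\<dots> = (\<lambda>(A, B). A \<times> B) ` (orbits G V \<alpha> \<times> orbits H W \<beta>)"
    unfolding orbits_def by fastforce
  finally show ?thesis .
qed

lemma aut_part:
  assumes "voltage_assignment V E W EF \<phi>"
    and "aut_action G V E \<alpha>" and "aut_action H W EF \<beta>"
    and "F_phi_compatible G E W \<phi> \<alpha>" and "X_phi_compatible H E W \<phi> \<beta>"
  shows "aut_action (G \<times>\<times> H) (V \<times> W) (bundle_adj E EF \<phi>) (prod_action V W \<alpha> \<beta>)"
proof -
  have A: "group_action G V \<alpha>" and B: "group_action H W \<beta>" using assms by (auto simp: aut_action_def)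
  interpret A: group_action G V \<alpha> by fact
  interpret B: group_action H W \<beta> by fact
  have ga: "group_action (G \<times>\<times> H) (V \<times> W) (prod_action V W \<alpha> \<beta>)" using prod_group_action A B .
  interpret P: group_action "G \<times>\<times> H" "V \<times> W" "prod_action V W \<alpha> \<beta>" by fact
  show ?thesis unfolding aut_action_def
  proof (intro conjI ballI)
    show "group_action (G \<times>\<times> H) (V \<times> W) (prod_action V W \<alpha> \<beta>)" by fact
    fix x assume x: "x \<in> carrier (G \<times>\<times> H)"
    obtain g h where gh: "x = (g, h)" "g \<in> carrier G" "h \<in> carrier H" using x by auto
    have autg: "graph_aut V E (\<alpha> g)" using assms(2) gh by (auto simp: aut_action_def)
    have auth: "graph_aut W EF (\<beta> h)" using assms(3) gh by (auto simp: aut_action_def)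
    show "graph_aut (V \<times> W) (bundle_adj E EF \<phi>) (prod_action V W \<alpha> \<beta> x)"
      unfolding graph_aut_def
    proof (intro conjI ballI)
      show "bij_betw (prod_action V W \<alpha> \<beta> x) (V \<times> W) (V \<times> W)"
        using P.bij_prop0[OF x] by (auto simp: Bij_def)
    next
      fix p q assume p: "p \<in> V \<times> W" and q: "q \<in> V \<times> W"
      obtain u i where ui: "p = (u, i)" "u \<in> V" "i \<in> W" using p by auto
      obtain v j where vj: "q = (v, j)" "v \<in> V" "j \<in> W" using q by auto
      have injg: "\<alpha> g u = \<alpha> g v \<longleftrightarrow> u = v" using A.inj_prop[OF gh(2)] ui vj by (auto dest: inj_onD)
      have injh: "\<beta> h j = \<beta> h k \<longleftrightarrow> j = k" if "k \<in> W" for k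
        using B.inj_prop[OF gh(3)] vj that by (auto dest: inj_onD)
      have Eg: "E (\<alpha> g u) (\<alpha> g v) \<longleftrightarrow> E u v" using autg ui vj by (auto simp: graph_aut_def)
      have EFh: "EF (\<beta> h i) (\<beta> h j) \<longleftrightarrow> EF i j" using auth ui vj by (auto simp: graph_aut_def)
      have hi: "\<beta> h i \<in> W" using B.element_image gh ui by blast
      have phi_eq: "\<phi> (\<alpha> g u) (\<alpha> g v) (\<beta> h i) = \<beta> h (\<phi> u v i)" and phiW: "\<phi> u v i \<in> W"
        if "E u v"
      proof -
        have "\<phi> (\<alpha> g u) (\<alpha> g v) (\<beta> h i) = \<phi> u v (\<beta> h i)"
          using assms(4) gh that hi by (auto simp: F_phi_compatible_def)
        also have "\<dots> = \<beta> h (\<phi> u v i)"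
          using assms(5) gh that ui by (auto simp: X_phi_compatible_def)
        finally show "\<phi> (\<alpha> g u) (\<alpha> g v) (\<beta> h i) = \<beta> h (\<phi> u v i)" .
        have "graph_aut W EF (\<phi> u v)" using assms(1) that by (auto simp: voltage_assignment_def)
        then show "\<phi> u v i \<in> W" using ui by (auto simp: graph_aut_def bij_betw_def)
      qed
      have key: "(\<beta> h j = \<phi> (\<alpha> g u) (\<alpha> g v) (\<beta> h i)) \<longleftrightarrow> j = \<phi> u v i" if "E u v"
        using phi_eq[OF that] phiW[OF that] injh by simp
      have pa: "prod_action V W \<alpha> \<beta> x p = (\<alpha> g u, \<beta> h i)" "prod_action V W \<alpha> \<beta> x q = (\<alpha> g v, \<beta> h j)"
        using gh ui vj by (auto simp: prod_action_def)
      show "bundle_adj E EF \<phi> p q = bundle_adj E EF \<phi> (prod_action V W \<alpha> \<beta> x p) (prod_action V W \<alpha> \<beta> x q)"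
        unfolding pa using ui vj injg Eg EFh key
        by (auto simp: bundle_adj_def)
    qed
  qed
qed

theorem lemma3p2:
  fixes G :: "('g, 'm) monoid_scheme" and H :: "('h, 'n) monoid_scheme"
    and V :: "'a set" and E :: "'a \<Rightarrow> 'a \<Rightarrow> bool"
    and W :: "'b set" and EF :: "'b \<Rightarrow> 'b \<Rightarrow> bool"
    and \<phi> :: "'a \<Rightarrow> 'a \<Rightarrow> 'b \<Rightarrow> 'b"
    and \<alpha> :: "'g \<Rightarrow> 'a \<Rightarrow> 'a" and \<beta> :: "'h \<Rightarrow> 'b \<Rightarrow> 'b"
  assumes "graph V E" and "graph W EF"
    and "voltage_assignment V E W EF \<phi>"
    and "aut_action G V E \<alpha>" and "without_inversions G E \<alpha>"
    and "aut_action H W EF \<beta>" and "without_inversions H EF \<beta>"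
    and "F_phi_compatible G E W \<phi> \<alpha>" and "X_phi_compatible H E W \<phi> \<beta>"
  shows "aut_action (G \<times>\<times> H) (V \<times> W) (bundle_adj E EF \<phi>) (prod_action V W \<alpha> \<beta>) \<and>
         (finite_covolume G V \<alpha> \<and> finite_covolume H W \<beta> \<longrightarrow>
          finite_covolume (G \<times>\<times> H) (V \<times> W) (prod_action V W \<alpha> \<beta>))"
proof (intro conjI impI)
  show "aut_action (G \<times>\<times> H) (V \<times> W) (bundle_adj E EF \<phi>) (prod_action V W \<alpha> \<beta>)"
    using aut_part assms(3,4,6,8,9) by blast
  assume cv: "finite_covolume G V \<alpha> \<and> finite_covolume H W \<beta>"
  have A: "group_action G V \<alpha>" and B: "group_action H W \<beta>" using assms by (auto simp: aut_action_def)
  interpret A: group_action G V \<alpha> by fact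
  interpret B: group_action H W \<beta> by fact
  define f1 where "f1 = (\<lambda>orb. 1 / real (card (stabilizer G \<alpha> (SOME v. v \<in> orb))))"
  define f2 where "f2 = (\<lambda>orb. 1 / real (card (stabilizer H \<beta> (SOME v. v \<in> orb))))"
  let ?P = "prod_action V W \<alpha> \<beta>"
  define f where "f = (\<lambda>orb. 1 / real (card (stabilizer (G \<times>\<times> H) ?P (SOME v. v \<in> orb))))"
  have s1: "f1 summable_on orbits G V \<alpha>" using cv by (simp add: finite_covolume_def f1_def)
  have s2: "f2 summable_on orbits H W \<beta>" using cv by (simp add: finite_covolume_def f2_def)
  have fin: "\<forall>p\<in>V \<times> W. finite (stabilizer (G \<times>\<times> H) ?P p)"
  proof
    fix p assume "p \<in> V \<times> W"
    then obtain v i where vi: "p = (v, i)" "v \<in> V" "i \<in> W" by blast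
    have "finite (stabilizer G \<alpha> v)" "finite (stabilizer H \<beta> i)"
      using cv vi unfolding finite_covolume_def by blast+
    then show "finite (stabilizer (G \<times>\<times> H) ?P p)"
      unfolding vi(1) prod_stab[OF vi(2,3)] by (rule finite_cartesian_product)
  qed
  have inj: "inj_on (\<lambda>(A, B). A \<times> B) (orbits G V \<alpha> \<times> orbits H W \<beta>)"
  proof (rule inj_onI, clarify)
    fix A B A' B'
    assume "A \<in> orbits G V \<alpha>" "B \<in> orbits H W \<beta>" "A' \<in> orbits G V \<alpha>" "B' \<in> orbits H W \<beta>"
      "A \<times> B = A' \<times> B'"
    then show "A = A' \<and> B = B'" using A.orbit_nonempty B.orbit_nonempty
      by (metis times_eq_iff)
  qed
  have comp: "(f \<circ> (\<lambda>(A, B). A \<times> B)) ab = (\<lambda>(x, y). f1 x * f2 y) ab"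
    if ab_in: "ab \<in> orbits G V \<alpha> \<times> orbits H W \<beta>" for ab
  proof -
    obtain A B where ab: "ab = (A, B)" "A \<in> orbits G V \<alpha>" "B \<in> orbits H W \<beta>" using ab_in by blast
    define p where "p = (SOME p. p \<in> A \<times> B)"
    have "A \<times> B \<noteq> {}" using ab A.orbit_nonempty B.orbit_nonempty by auto
    then have p: "p \<in> A \<times> B" unfolding p_def by (metis ex_in_conv someI)
    have AV: "A \<subseteq> V" using ab(2) A.orbits_coverture by blast
    have BW: "B \<subseteq> W" using ab(3) B.orbits_coverture by blast
    obtain a b where abp: "p = (a, b)" "a \<in> A" "b \<in> B" using p by auto
    have "card (stabilizer (G \<times>\<times> H) ?P p) = card (stabilizer G \<alpha> a) * card (stabilizer H \<beta> b)"
    proof -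
      have aV: "a \<in> V" using abp AV by blast
      have bW: "b \<in> W" using abp BW by blast
      show ?thesis unfolding abp(1) prod_stab[OF aV bW] by (rule card_cartesian_product)
    qed
    moreover have "card (stabilizer G \<alpha> (SOME v. v \<in> A)) = card (stabilizer G \<alpha> a)"
      using A.orbit_rep_card ab abp by blast
    moreover have "card (stabilizer H \<beta> (SOME v. v \<in> B)) = card (stabilizer H \<beta> b)"
      using B.orbit_rep_card ab abp by blast
    ultimately show ?thesis unfolding ab f_def f1_def f2_def using p_def by simp
  qed
  have "(\<lambda>(x, y). f1 x * f2 y) summable_on (orbits G V \<alpha> \<times> orbits H W \<beta>)"
    using s1 s2 by (rule prod_summable) (auto simp: f1_def f2_def)
  moreover have "(f \<circ> (\<lambda>(A, B). A \<times> B)) summable_on (orbits G V \<alpha> \<times> orbits H W \<beta>) \<longleftrightarrow>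
     (\<lambda>(x, y). f1 x * f2 y) summable_on (orbits G V \<alpha> \<times> orbits H W \<beta>)"
    by (rule summable_on_cong) (rule comp)
  ultimately have "(f \<circ> (\<lambda>(A, B). A \<times> B)) summable_on (orbits G V \<alpha> \<times> orbits H W \<beta>)"
    by simp
  then have "f summable_on ((\<lambda>(A, B). A \<times> B) ` (orbits G V \<alpha> \<times> orbits H W \<beta>))"
    by (subst summable_on_reindex[OF inj])
  then have sf: "f summable_on orbits (G \<times>\<times> H) (V \<times> W) ?P"
    by (subst prod_orbits)
  show "finite_covolume (G \<times>\<times> H) (V \<times> W) ?P"
    unfolding finite_covolume_def
  proof (intro conjI)
    show "\<forall>p\<in>V \<times> W. finite (stabilizer (G \<times>\<times> H) ?P p)" by (rule fin)
    show "(\<lambda>orb. 1 / real (card (stabilizer (G \<times>\<times> H) ?P (SOME v. v \<in> orb))))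
        summable_on orbits (G \<times>\<times> H) (V \<times> W) ?P"
      using sf unfolding f_def .
  qed
qed

end
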